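(* Let $\mathcal{H}$ be a finite-dimensional complex Hilbert space and $A,B$ linear operators on $\mathcal{H}$. Let $0<p,q<1$ with $p+q=1$ and $\mathcal{L}=qA+pB$. Suppose (i) $\|A\|\le1$ and $\|B\|\le1$ (operator norms); (ii) $1$ is an eigenvalue of $A$ and of $B$, and there is a nonzero $\rho_1\in\mathcal{H}$ with $A^*\rho_1=\rho_1$ and $B^*\rho_1=\rho_1$. Then: (a) if $\mathcal{L}\rho=\lambda\rho$ for some nonzero $\rho$ and $|\lambda|=1$, then $A\rho=\lambda\rho$ and $B\rho=\lambda\rho$; (b) if $1$ is an eigenvalue of $B$ of algebraic multiplicity $1$, then $1$ is an eigenvalue of $\mathcal{L}$ of algebraic multiplicity $1$. *)

theory Defs
  imports "HOL-Analysis.Analysis" "HOL-Computational_Algebra.Polynomial"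
begin

text \<open>A finite-dimensional complex Hilbert space is modelled as complex^'n with its
standard (Euclidean) inner product; linear operators are matrices complex^'n^'n
acting by matrix-vector multiplication.\<close>

definition op_norm :: "complex^'n^'n \<Rightarrow> real" where
  "op_norm A = onorm (\<lambda>x. A *v x)"

definition adjoint_mat :: "complex^'n^'n \<Rightarrow> complex^'n^'n" where
  "adjoint_mat A = (\<chi> i j. cnj (A $ j $ i))"

definition is_eigenvalue :: "complex^'n^'n \<Rightarrow> complex \<Rightarrow> bool" where
  "is_eigenvalue A c \<longleftrightarrow> (\<exists>v. v \<noteq> 0 \<and> A *v v = c *s v)"

definition charpoly :: "complex^'n^'n \<Rightarrow> complex poly" where
  "charpoly A = det (\<chi> i j. (if i = j then [:0, 1:] else 0) - [:A $ i $ j:])"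

definition alg_mult :: "complex^'n^'n \<Rightarrow> complex \<Rightarrow> nat" where
  "alg_mult A c = order c (charpoly A)"

end

theory Submission
  imports Defs
begin


lemma inner_cplx: "inner (x::complex) y = Re (x * cnj y)"
  by (simp add: inner_complex_def)

lemma adj_inner: "inner (A *v x) y = inner x (adjoint_mat A *v y)"
proof -
  have "inner (A *v x) y = Re (\<Sum>i\<in>UNIV. \<Sum>j\<in>UNIV. A$i$j * x$j * cnj (y$i))"
    by (simp add: inner_vec_def inner_cplx matrix_vector_mult_def sum_distrib_right Re_sum)
  also have "\<dots> = Re (\<Sum>j\<in>UNIV. \<Sum>i\<in>UNIV. x$j * cnj (cnj (A$i$j) * y$i))"
    by (subst sum.swap) (simp add: mult_ac)
  also have "\<dots> = inner x (adjoint_mat A *v y)"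
    by (simp add: inner_vec_def inner_cplx matrix_vector_mult_def adjoint_mat_def sum_distrib_left Re_sum)
  finally show ?thesis .
qed

lemma norm_smult: "norm (c *s (x::complex^'n)) = cmod c * norm x"
  unfolding norm_vec_def by (simp add: norm_mult L2_set_right_distrib)

lemma mv_scaleR: "(A::complex^'n^'n) *v (r *\<^sub>R x) = r *\<^sub>R (A *v x)"
  by (simp add: vec_eq_iff matrix_vector_mult_def scaleR_sum_right mult_ac)

lemma scaleR_mv: "((r::real) *\<^sub>R (A::complex^'n^'n)) *v x = r *\<^sub>R (A *v x)"
  by (simp add: vec_eq_iff matrix_vector_mult_def scaleR_sum_right mult_ac)

lemma mv_linear: "linear ((*v) (A::complex^'n^'n))"
  by (rule linearI) (simp_all add: matrix_vector_right_distrib mv_scaleR)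

lemma mv_bl: "bounded_linear ((*v) (A::complex^'n^'n))"
  by (simp add: linear_conv_bounded_linear mv_linear)

lemma mv_norm: "op_norm A \<le> 1 \<Longrightarrow> norm (A *v x) \<le> norm x"
proof -
  assume a: "op_norm A \<le> 1"
  have "norm (A *v x) \<le> op_norm A * norm x"
    unfolding op_norm_def using onorm[OF mv_bl] by blast
  also have "\<dots> \<le> norm x" using mult_right_mono[OF a norm_ge_zero[of x]] by simp
  finally show ?thesis .
qed

lemma det_nz_inj: "det (A::complex^'n^'n) \<noteq> 0 \<longleftrightarrow> inj ((*v) A)"
  using det_nz_iff_inj_gen[of "(*v) A"] matrix_vector_mul_linear_gen by simp


lemma convex_id:
  fixes x y :: "'a::real_inner"
  assumes "p + q = 1"
  shows "(norm (q *\<^sub>R x + p *\<^sub>R y))^2 = q * (norm x)^2 + p * (norm y)^2 - p * q * (norm (x - y))^2"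
proof -
  have p: "p = 1 - q" using assms by simp
  show ?thesis unfolding power2_norm_eq_inner p
    by (simp add: inner_add_left inner_add_right inner_diff_left inner_diff_right inner_commute[of y x] algebra_simps)
qed

lemma part_a:
  fixes A B :: "complex^'n^'n"
  assumes "0 < p" "0 < q" "p + q = 1"
    and nA: "\<And>x. norm (A *v x) \<le> norm x" and nB: "\<And>x. norm (B *v x) \<le> norm x"
    and ev: "(q *\<^sub>R A + p *\<^sub>R B) *v \<rho> = l *s \<rho>" and l: "cmod l = 1"
  shows "A *v \<rho> = l *s \<rho> \<and> B *v \<rho> = l *s \<rho>"
proof -
  define x where "x = A *v \<rho>"
  define y where "y = B *v \<rho>"
  have e: "q *\<^sub>R x + p *\<^sub>R y = l *s \<rho>"
    using ev by (simp add: x_def y_def matrix_vector_mult_add_rdistrib scaleR_mv)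
  have nr: "norm (l *s \<rho>) = norm \<rho>" using l by (simp add: norm_smult)
  have x: "(norm x)^2 \<le> (norm \<rho>)^2" unfolding x_def using nA[of \<rho>] by (simp add: power_mono)
  have y: "(norm y)^2 \<le> (norm \<rho>)^2" unfolding y_def using nB[of \<rho>] by (simp add: power_mono)
  have "(norm \<rho>)^2 = q * (norm x)^2 + p * (norm y)^2 - p * q * (norm (x - y))^2"
    using convex_id[OF assms(3), of x y] e nr by simp
  also have "\<dots> \<le> q * (norm \<rho>)^2 + p * (norm \<rho>)^2 - p * q * (norm (x - y))^2"
    using x y assms(1,2) by (intro diff_right_mono add_mono mult_left_mono) auto
  finally have f: "(norm \<rho>)^2 \<le> q * (norm \<rho>)^2 + p * (norm \<rho>)^2 - p * q * (norm (x - y))^2" .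
  have "q * (norm \<rho>)^2 + p * (norm \<rho>)^2 = (norm \<rho>)^2"
    using assms(3) by (metis distrib_right mult_1 add.commute)
  hence "p * q * (norm (x - y))^2 \<le> 0" using f by linarith
  moreover have "p * q > 0" using assms by simp
  ultimately have "(norm (x - y))^2 \<le> 0"
    by (metis mult_le_0_iff not_le)
  hence "x = y" by simp
  hence "x = l *s \<rho>" using e assms(3)
    by (metis scaleR_add_left scaleR_one add.commute)
  thus ?thesis using \<open>x = y\<close> x_def y_def by simp
qed



lemma inj_mv: "inj ((*v) (R::complex^'n^'n)) \<longleftrightarrow> (\<forall>x. R *v x = 0 \<longrightarrow> x = 0)"
  using vec.inj_on_iff_eq_0[of UNIV R] by simp

lemma basis_mat:
  fixes S :: "(complex^'n) set"
  assumes "vec.independent S"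
  shows "\<exists>R::complex^'n^'n. det R \<noteq> 0 \<and> (\<forall>s\<in>S. \<exists>j. column j R = s)"
proof -
  define E where "E = vec.extend_basis S"
  have iE: "vec.independent E" and SE: "S \<subseteq> E" and sE: "vec.span E = UNIV"
    using vec.independent_extend_basis[OF assms] vec.extend_basis_superset[OF assms]
      vec.span_extend_basis[OF assms] unfolding E_def by auto
  have fE: "finite E" using vec.finiteI_independent[OF iE] .
  have "card E = vec.dim (UNIV :: (complex^'n) set)"
    using vec.basis_card_eq_dim[of E UNIV] iE sE by auto
  hence cE: "card E = card (UNIV :: 'n set)" by (metis vec_dim_card)
  obtain g where g: "bij_betw g (UNIV :: 'n set) E"
    using finite_same_card_bij[OF _ fE] cE by (metis finite)
  define R :: "complex^'n^'n" where "R = (\<chi> i j. g j $ i)"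
  have col: "column j R = g j" for j by (simp add: R_def column_def vec_eq_iff)
  have "inj ((*v) R)"
    unfolding inj_mv
  proof (intro allI impI)
    fix x assume "R *v x = 0"
    hence "(\<Sum>j\<in>UNIV. x$j *s g j) = 0" by (simp add: matrix_mult_sum col)
    hence "(\<Sum>v\<in>E. x $ (inv_into UNIV g v) *s v) = 0"
      using sum.reindex_bij_betw[OF g, of "\<lambda>v. x $ (inv_into UNIV g v) *s v"] g
      by (simp add: bij_betw_inv_into_left)
    hence "\<forall>v\<in>E. x $ (inv_into UNIV g v) = 0"
      using iE fE by (auto simp: vec.independent_explicit)
    hence "x $ j = 0" for j using g
      by (metis bij_betwE bij_betw_inv_into_left UNIV_I)
    thus "x = 0" by (simp add: vec_eq_iff)
  qed
  hence "det R \<noteq> 0" by (simp add: det_nz_inj)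
  moreover have "\<forall>s\<in>S. \<exists>j. column j R = s"
    using SE g by (auto simp: col bij_betw_def)
  ultimately show ?thesis by blast
qed



lemma poly_det: "poly (det (X::complex poly^'n^'n)) t = det (\<chi> i j. poly (X$i$j) t)"
  unfolding det_def by (simp add: poly_sum poly_prod)

lemma det_col_mul:
  "det ((\<chi> i j. if j = k then c * a i j else a i j)::complex^'n^'n) = c * det ((\<chi> i j. a i j)::complex^'n^'n)"
proof -
  have "det ((\<chi> i j. if j = k then c * a i j else a i j)::complex^'n^'n)
      = det (transpose ((\<chi> i j. if j = k then c * a i j else a i j)::complex^'n^'n))" by simp
  also have "transpose ((\<chi> i j. if j = k then c * a i j else a i j)::complex^'n^'n)
      = (\<chi> j. if j = k then c *s (\<chi> i. a i j) else (\<chi> i. a i j))"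
    by (simp add: transpose_def vec_eq_iff)
  also have "det \<dots> = c * det ((\<chi> j. if j = k then (\<chi> i. a i j) else (\<chi> i. a i j))::complex^'n^'n)"
    by (rule det_row_mul)
  also have "((\<chi> j. if j = k then (\<chi> i. a i j) else (\<chi> i. a i j))::complex^'n^'n) = transpose (\<chi> i j. a i j)"
    by (simp add: transpose_def vec_eq_iff)
  finally show ?thesis by simp
qed

definition Et :: "complex^'n^'n \<Rightarrow> complex \<Rightarrow> complex^'n^'n" where
  "Et X t = (\<chi> i j. (if i = j then t else 0) - X$i$j)"

lemma poly_charpoly: "poly (charpoly X) t = det (Et X t)"
  unfolding charpoly_def poly_det Et_def by (rule arg_cong[where f=det]) (simp add: vec_eq_iff)

lemma Et_mv: fixes X :: "complex^'n^'n" shows "Et X t *v y = t *s y - X *v y"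
proof -
  have "(\<Sum>j\<in>UNIV. (if i = j then t else 0) * y $ j) = t * y $ i" for i :: 'n
    by (simp add: if_distrib[of "\<lambda>a. a * _"] cong: if_cong)
  thus ?thesis by (simp add: Et_def vec_eq_iff matrix_vector_mult_def left_diff_distrib sum_subtractf)
qed




lemma fix_adj:
  fixes T :: "complex^'n^'n"
  assumes n: "\<And>x. norm (T *v x) \<le> norm x" and a: "adjoint_mat T *v v = v"
  shows "T *v v = v"
proof -
  have i: "inner (T *v v) v = inner v v" using adj_inner[of T v v] a by simp
  have "(norm (T *v v - v))^2 = (norm (T *v v))^2 - 2 * inner (T *v v) v + (norm v)^2"
    unfolding power2_norm_eq_inner inner_diff_left inner_diff_right
    using inner_commute[of v "T *v v"] by linarith
  also have "\<dots> = (norm (T *v v))^2 - (norm v)^2" using i by (simp add: power2_norm_eq_inner)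
  also have "\<dots> \<le> 0" using n[of v] by (simp add: power_mono)
  finally show ?thesis by simp
qed

lemma not_range:
  fixes T :: "complex^'n^'n"
  assumes a: "adjoint_mat T *v v = v" and "v \<noteq> 0"
  shows "Et T 1 *v y \<noteq> v"
proof
  assume e: "Et T 1 *v y = v"
  have "inner v v = inner (y - T *v y) v" using e by (simp add: Et_mv)
  also have "\<dots> = 0" using adj_inner[of T y v] a by (simp add: inner_diff_left)
  finally show False using assms(2) by simp
qed

lemma mm_col: "(A ** R) $ i $ k = (A *v column k R) $ i"
  by (simp add: matrix_matrix_mult_def matrix_vector_mult_def column_def)

lemma fixcol:
  fixes X :: "complex^'n^'n"
  assumes "X *v column k R = column k R"
  shows "(Et X t ** R) $ i $ k = (t - 1) * R $ i $ k"
  unfolding mm_col Et_mv using assms by (simp add: column_def left_diff_distrib)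

lemma charpoly_nz:
  fixes X :: "complex^'n^'n"
  assumes n: "\<And>x. norm (X *v x) \<le> norm x"
  shows "charpoly X \<noteq> 0"
proof
  assume "charpoly X = 0"
  hence "det (Et X 2) = 0" using poly_charpoly[of X 2] by simp
  hence "\<not> inj ((*v) (Et X 2))" using det_nz_inj[of "Et X 2"] by blast
  then obtain x where x: "x \<noteq> 0" "Et X 2 *v x = 0" unfolding inj_mv by blast
  hence "X *v x = 2 *s x" by (simp add: Et_mv)
  hence "norm (X *v x) = 2 * norm x" by (simp add: norm_smult)
  with n[of x] x show False by simp
qed

lemma cpoly_id:
  fixes X R :: "complex^'n^'n"
  shows "poly (det (\<chi> i j. if j \<in> J then [:R$i$j:] else
            (\<Sum>l\<in>UNIV. ((if i = l then [:0,1:] else 0) - [:X$i$l:]) * [:R$l$j:]))) t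
       = det (\<chi> i j. if j \<in> J then R$i$j else (Et X t ** R)$i$j)"
proof -
  have e: "poly ((if i = l then [:0,1:] else 0) - [:X$i$l:]) t = Et X t $ i $ l" for i l
    by (cases "i = l") (simp_all add: Et_def)
  have "poly (if j \<in> J then [:R$i$j:] else
            (\<Sum>l\<in>UNIV. ((if i = l then [:0,1:] else 0) - [:X$i$l:]) * [:R$l$j:])) t
        = (if j \<in> J then R$i$j else (Et X t ** R)$i$j)" for i j
  proof (cases "j \<in> J")
    case False
    show ?thesis using False
      by (simp only: if_False poly_sum poly_mult e matrix_matrix_mult_def vec_lambda_beta) simp
  qed simp
  thus ?thesis unfolding poly_det by (intro arg_cong[where f=det]) (simp add: vec_eq_iff)
qed




lemma mv_cs: "(A::complex^'n^'n) *v (c *s x) = c *s (A *v x)"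
  by (simp add: vec_eq_iff matrix_vector_mult_def sum_distrib_left mult_ac)

lemma geomB:
  fixes B :: "complex^'n^'n"
  assumes n: "\<And>x. norm (B *v x) \<le> norm x" and v: "v \<noteq> 0" "B *v v = v"
    and o: "order 1 (charpoly B) = 1" and u: "B *v u = u"
  shows "\<exists>c. u = c *s v"
proof (rule ccontr)
  assume nc: "\<not> (\<exists>c. u = c *s v)"
  have "u \<notin> vec.span {v}" using nc by (auto simp: vec.span_singleton)
  hence ind: "vec.independent {u, v}"
    using vec.independent_insertI[of u "{v}"] v(1) by simp
  obtain R :: "complex^'n^'n" where R: "det R \<noteq> 0" "\<forall>s\<in>{u,v}. \<exists>j. column j R = s"
    using basis_mat[OF ind] by blast
  then obtain j1 j2 where j: "column j1 R = v" "column j2 R = u" by blast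
  have "u \<noteq> v" using nc by (metis vector_smult_lid)
  hence j12: "j1 \<noteq> j2" using j by auto
  have f1: "B *v column j1 R = column j1 R" and f2: "B *v column j2 R = column j2 R"
    using j v u by auto
  have key: "det (Et B t) * det R = (t - 1)^2 * det ((\<chi> i j. if j \<in> {j1,j2} then R$i$j else (Et B t ** R)$i$j)::complex^'n^'n)" for t
  proof -
    define a1 where "a1 i j = (if j = j1 then R$i$j else if j = j2 then (t-1) * R$i$j else (Et B t ** R)$i$j)" for i j
    define a2 where "a2 i j = (if j \<in> {j1,j2} then R$i$j else (Et B t ** R)$i$j)" for i j
    have e1: "Et B t ** R = (\<chi> i j. if j = j1 then (t-1) * a1 i j else a1 i j)"
      using j12 by (auto simp: vec_eq_iff a1_def fixcol[OF f1] fixcol[OF f2])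
    have e2: "((\<chi> i j. a1 i j)::complex^'n^'n) = (\<chi> i j. if j = j2 then (t-1) * a2 i j else a2 i j)"
      using j12 by (auto simp: vec_eq_iff a1_def a2_def)
    have "det (Et B t) * det R = det (Et B t ** R)" by (simp add: det_mul)
    also have "\<dots> = (t-1) * ((t-1) * det ((\<chi> i j. a2 i j)::complex^'n^'n))"
      unfolding e1 det_col_mul e2 ..
    finally show ?thesis by (simp add: a2_def power2_eq_square)
  qed
  define Yp :: "complex poly^'n^'n" where "Yp = (\<chi> i j. if j \<in> {j1,j2} then [:R$i$j:] else
            (\<Sum>l\<in>UNIV. ((if i = l then [:0,1:] else 0) - [:B$i$l:]) * [:R$l$j:]))"
  have pid: "charpoly B * [:det R:] = [:-1,1:]^2 * det Yp"
  proof (rule poly_eq_poly_eq_iff[THEN iffD1], rule ext)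
    fix t
    have "poly (charpoly B * [:det R:]) t = det (Et B t) * det R" by (simp add: poly_charpoly)
    also have "\<dots> = (t - 1)^2 * poly (det Yp) t" unfolding key Yp_def cpoly_id ..
    also have "\<dots> = poly ([:-1,1:]^2 * det Yp) t" by simp
    finally show "poly (charpoly B * [:det R:]) t = poly ([:-1,1:]^2 * det Yp) t" .
  qed
  have "charpoly B = charpoly B * [:det R:] * [:1 / det R:]"
    using R(1) by (simp add: mult.assoc)
  also have "\<dots> = [:-1,1:]^2 * (det Yp * [:1 / det R:])" unfolding pid by (simp add: mult.assoc)
  finally have "[:-1,1:]^2 dvd charpoly B" by (metis dvd_triv_left)
  hence "2 \<le> order 1 (charpoly B)" using charpoly_nz[OF n] order_divides by blast
  with o show False by simp
qed




lemma mv_axis: "(R::complex^'n^'n) *v axis k 1 = column k R"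
proof -
  have "(\<Sum>j\<in>UNIV. R$i$j * (if j = k then 1 else 0)) = R$i$k" for i
    by (simp add: if_distrib[of "\<lambda>a. _ * a"] cong: if_cong)
  thus ?thesis by (simp add: vec_eq_iff matrix_vector_mult_def column_def axis_def)
qed

lemma adjoint_comb: "adjoint_mat (q *\<^sub>R A + p *\<^sub>R B) = q *\<^sub>R adjoint_mat A + p *\<^sub>R adjoint_mat B"
  by (simp add: adjoint_mat_def vec_eq_iff)

lemma Y1_mv:
  fixes M R :: "complex^'n^'n"
  assumes z: "M *v column j1 R = 0"
  shows "((\<chi> i j. if j \<in> {j1} then R$i$j else (M ** R)$i$j)::complex^'n^'n) *v x
         = M *v (R *v x) + x$j1 *s column j1 R"
proof -
  have c: "(M ** R) $ i $ j1 = 0" for i using z by (simp add: mm_col vec_eq_iff)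
  have "(\<Sum>j\<in>UNIV. (if j \<in> {j1} then R$i$j else (M ** R)$i$j) * x$j)
      = (\<Sum>j\<in>UNIV. (M ** R)$i$j * x$j + (if j = j1 then R$i$j * x$j else 0))" for i
    by (rule sum.cong) (auto simp: c)
  thus ?thesis
    unfolding matrix_vector_mul_assoc
    by (simp add: vec_eq_iff matrix_vector_mult_def sum.distrib column_def mult.commute)
qed

theorem mainTheorem3:
  fixes A B :: "complex^'n^'n" and p q :: real and \<rho>1 :: "complex^'n"
  assumes "0 < p" "p < 1" "0 < q" "q < 1" "p + q = 1"
    and "op_norm A \<le> 1" "op_norm B \<le> 1"
    and "is_eigenvalue A 1" "is_eigenvalue B 1"
    and "\<rho>1 \<noteq> 0" "adjoint_mat A *v \<rho>1 = \<rho>1" "adjoint_mat B *v \<rho>1 = \<rho>1"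
  shows "(\<forall>\<rho> l. \<rho> \<noteq> 0 \<longrightarrow> (q *\<^sub>R A + p *\<^sub>R B) *v \<rho> = l *s \<rho> \<longrightarrow> cmod l = 1 \<longrightarrow>
            A *v \<rho> = l *s \<rho> \<and> B *v \<rho> = l *s \<rho>)
       \<and> (alg_mult B 1 = 1 \<longrightarrow>
            is_eigenvalue (q *\<^sub>R A + p *\<^sub>R B) 1 \<and> alg_mult (q *\<^sub>R A + p *\<^sub>R B) 1 = 1)"
proof -
  define L where "L = q *\<^sub>R A + p *\<^sub>R B"
  have nA: "\<And>x. norm (A *v x) \<le> norm x" using mv_norm assms(6) by blast
  have nB: "\<And>x. norm (B *v x) \<le> norm x" using mv_norm assms(7) by blast
  have nL: "norm (L *v x) \<le> norm x" for x
  proof -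
    have "norm (L *v x) = norm (q *\<^sub>R (A *v x) + p *\<^sub>R (B *v x))"
      by (simp add: L_def matrix_vector_mult_add_rdistrib scaleR_mv)
    also have "\<dots> \<le> q * norm (A *v x) + p * norm (B *v x)"
      using norm_triangle_ineq[of "q *\<^sub>R (A *v x)" "p *\<^sub>R (B *v x)"] assms(1,3) by simp
    also have "\<dots> \<le> q * norm x + p * norm x"
      using nA[of x] nB[of x] assms(1,3) by (intro add_mono mult_left_mono) auto
    also have "\<dots> = norm x" using assms(5) by (metis distrib_right mult_1 add.commute)
    finally show ?thesis .
  qed
  have partA: "\<forall>\<rho> l. \<rho> \<noteq> 0 \<longrightarrow> L *v \<rho> = l *s \<rho> \<longrightarrow> cmod l = 1 \<longrightarrow>
            A *v \<rho> = l *s \<rho> \<and> B *v \<rho> = l *s \<rho>"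
    using part_a[OF assms(1,3,5) nA nB] unfolding L_def by blast
  have partB: "is_eigenvalue L 1 \<and> alg_mult L 1 = 1" if am: "alg_mult B 1 = 1"
  proof -
    have adjL: "adjoint_mat L *v \<rho>1 = \<rho>1"
      unfolding L_def adjoint_comb using assms(5,11,12)
      by (simp add: matrix_vector_mult_add_rdistrib scaleR_mv add.commute[of q p] flip: scaleR_add_left)
    have Lr: "L *v \<rho>1 = \<rho>1" by (rule fix_adj[OF nL adjL])
    have Br: "B *v \<rho>1 = \<rho>1" by (rule fix_adj[OF nB assms(12)])
    have ev: "is_eigenvalue L 1" unfolding is_eigenvalue_def using Lr assms(10) by auto
    have geo: "\<exists>c. u = c *s \<rho>1" if "B *v u = u" for u
      using geomB[OF nB assms(10) Br _ that] am by (simp add: alg_mult_def)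
    have ind: "vec.independent {\<rho>1}" using assms(10) by simp
    obtain R :: "complex^'n^'n" where R: "det R \<noteq> 0" "\<forall>s\<in>{\<rho>1}. \<exists>j. column j R = s"
      using basis_mat[OF ind] by blast
    then obtain j1 where j: "column j1 R = \<rho>1" by blast
    have f1: "L *v column j1 R = column j1 R" using j Lr by simp
    have key: "det (Et L t) * det R = (t - 1) * det ((\<chi> i j. if j \<in> {j1} then R$i$j else (Et L t ** R)$i$j)::complex^'n^'n)" for t
    proof -
      define a2 where "a2 i j = (if j \<in> {j1} then R$i$j else (Et L t ** R)$i$j)" for i j
      have e1: "Et L t ** R = (\<chi> i j. if j = j1 then (t-1) * a2 i j else a2 i j)"
        by (auto simp: vec_eq_iff a2_def fixcol[OF f1])
      have "det (Et L t) * det R = det (Et L t ** R)" by (simp add: det_mul)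
      also have "\<dots> = (t-1) * det ((\<chi> i j. a2 i j)::complex^'n^'n)"
        unfolding e1 det_col_mul ..
      finally show ?thesis by (simp add: a2_def)
    qed
    define Yp :: "complex poly^'n^'n" where "Yp = (\<chi> i j. if j \<in> {j1} then [:R$i$j:] else
            (\<Sum>l\<in>UNIV. ((if i = l then [:0,1:] else 0) - [:L$i$l:]) * [:R$l$j:]))"
    have pid: "charpoly L * [:det R:] = [:-1,1:] * det Yp"
    proof (rule poly_eq_poly_eq_iff[THEN iffD1], rule ext)
      fix t
      have "poly (charpoly L * [:det R:]) t = det (Et L t) * det R" by (simp add: poly_charpoly)
      also have "\<dots> = (t - 1) * poly (det Yp) t" unfolding key Yp_def cpoly_id ..
      also have "\<dots> = poly ([:-1,1:] * det Yp) t" by (simp add: algebra_simps)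
      finally show "poly (charpoly L * [:det R:]) t = poly ([:-1,1:] * det Yp) t" .
    qed
    define Y1 :: "complex^'n^'n" where "Y1 = (\<chi> i j. if j \<in> {j1} then R$i$j else (Et L 1 ** R)$i$j)"
    have z: "Et L 1 *v column j1 R = 0" using f1 by (simp add: Et_mv)
    have injR: "\<And>x. R *v x = 0 \<Longrightarrow> x = 0" using R(1) det_nz_inj inj_mv by blast
    have "inj ((*v) Y1)" unfolding inj_mv
    proof (intro allI impI)
      fix x assume "Y1 *v x = 0"
      hence e: "Et L 1 *v (R *v x) = - (x$j1 *s \<rho>1)"
        unfolding Y1_def Y1_mv[OF z] j by (simp add: eq_neg_iff_add_eq_0)
      show "x = 0"
      proof (cases "x$j1 = 0")
        case False
        define c where "c = - 1 / x$j1"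
        have "Et L 1 *v (R *v (c *s x)) = c *s (Et L 1 *v (R *v x))" by (simp only: mv_cs)
        also have "\<dots> = c *s (- (x$j1 *s \<rho>1))" using e by simp
        also have "\<dots> = \<rho>1"
        proof -
          have "c * (- (x$j1 * \<rho>1$i)) = \<rho>1$i" for i using False by (simp add: c_def)
          thus ?thesis by (simp add: vec_eq_iff mult.assoc)
        qed
        finally have "Et L 1 *v (R *v (c *s x)) = \<rho>1" .
        with not_range[OF adjL assms(10)] show ?thesis by blast
      next
        case True
        hence "Et L 1 *v (R *v x) = 0" using e by simp
        hence Lfix: "L *v (R *v x) = 1 *s (R *v x)" by (simp add: Et_mv)
        show ?thesis
        proof (cases "R *v x = 0")
          case True thus ?thesis using injR by blast
        next
          case False
          have "B *v (R *v x) = 1 *s (R *v x)" using partA[rule_format, OF False Lfix] by simp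
          hence "B *v (R *v x) = R *v x" by simp
          then obtain c where c: "R *v x = c *s \<rho>1" using geo by blast
          have ax: "R *v axis j1 1 = \<rho>1" using j by (simp add: mv_axis)
          have "R *v (x - c *s axis j1 1) = 0" using c ax
            by (simp add: matrix_vector_mult_diff_distrib mv_cs)
          hence "x - c *s axis j1 1 = 0" by (rule injR)
          hence "x = c *s axis j1 1" by simp
          hence "c = 0" using True by (simp add: axis_def)
          thus ?thesis using c injR by simp
        qed
      qed
    qed
    hence "det Y1 \<noteq> 0" using det_nz_inj[of Y1] by blast
    moreover have "poly (det Yp) 1 = det Y1" unfolding Yp_def cpoly_id Y1_def ..
    ultimately have d1: "poly (det Yp) 1 \<noteq> 0" by simp
    hence Ynz: "det Yp \<noteq> 0" by auto
    have cnz: "charpoly L \<noteq> 0" using charpoly_nz[OF nL] .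
    have "order 1 (charpoly L * [:det R:]) = order 1 (charpoly L)"
      using cnz R(1) by (simp add: order_smult)
    moreover have "order 1 ([:-1,1:] * det Yp) = 1"
    proof -
      have "[:-1,1::complex:] \<noteq> 0" by simp
      hence nz: "[:-1,1:] * det Yp \<noteq> 0" using Ynz by (metis mult_eq_0_iff)
      have o1: "order 1 [:-1,1::complex:] = 1" using order_power_n_n[of "1::complex" 1] by simp
      show ?thesis unfolding order_mult[OF nz] o1 order_0I[OF d1] by simp
    qed
    ultimately have "order 1 (charpoly L) = 1" using pid by simp
    with ev show ?thesis by (simp add: alg_mult_def)
  qed
  show ?thesis using partA partB unfolding L_def by blast
qed


end
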